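(* Let $F$ be any channel with input alphabet $\{0,1\}$ and finite output alphabet. Then there exists a channel $D$ with input and output alphabet $\{0,1\}$ such that $\eta_{TV}(D)=\eta_{TV}(F)$ and $$\mathrm{BEC}(\alpha(F))\succeq_{\mathrm{deg}}F\succeq_{\mathrm{deg}}D,$$ where $\alpha(F)=1-\eta_{TV}(F)$.
   Context: $TV(P,Q)=\frac12\sum_y|P(y)-Q(y)|$. Dobrushin coefficient $\eta_{TV}(P)=\sup_{P_X\ne Q_X}\frac{TV(P\circ P_X,P\circ Q_X)}{TV(P_X,Q_X)}$, $P\circ P_X$ the output distribution. Doeblin coefficient $\alpha(P)=\sum_y\min_xP_{Y|X}(y|x)$. $\mathrm{BEC}(\varepsilon)$: binary erasure channel with input $\{0,1\}$, output $\{0,e,1\}$, input $x$ mapped to $x$ with probability $1-\varepsilon$ and to $e$ with probability $\varepsilon$. $P_{Y|X}\succeq_{\mathrm{deg}}Q_{Y'|X}$ means $Q_{Y'|X}=D_{Y'|Y}\circ P_{Y|X}$ for some channel $D_{Y'|Y}$. *)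

theory Defs
  imports Complex_Main
begin

text \<open>A channel P_{Y|X} is represented as a function P x y = P_{Y|X}(y|x).\<close>

definition is_dist :: "('a::finite \<Rightarrow> real) \<Rightarrow> bool" where
  "is_dist p \<longleftrightarrow> (\<forall>a. p a \<ge> 0) \<and> (\<Sum>a\<in>UNIV. p a) = 1"

definition is_channel :: "('x \<Rightarrow> 'y::finite \<Rightarrow> real) \<Rightarrow> bool" where
  "is_channel P \<longleftrightarrow> (\<forall>x. is_dist (P x))"

definition TV :: "('y::finite \<Rightarrow> real) \<Rightarrow> ('y \<Rightarrow> real) \<Rightarrow> real" where
  "TV p q = (1/2) * (\<Sum>y\<in>UNIV. \<bar>p y - q y\<bar>)"

definition out_dist :: "('x::finite \<Rightarrow> 'y \<Rightarrow> real) \<Rightarrow> ('x \<Rightarrow> real) \<Rightarrow> 'y \<Rightarrow> real" where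
  "out_dist P px y = (\<Sum>x\<in>UNIV. px x * P x y)"

definition eta_TV :: "('x::finite \<Rightarrow> 'y::finite \<Rightarrow> real) \<Rightarrow> real" where
  "eta_TV P = Sup {TV (out_dist P px) (out_dist P qx) / TV px qx | px qx.
                   is_dist px \<and> is_dist qx \<and> px \<noteq> qx}"

definition doeblin :: "('x::finite \<Rightarrow> 'y::finite \<Rightarrow> real) \<Rightarrow> real" where
  "doeblin P = (\<Sum>y\<in>UNIV. Min (range (\<lambda>x. P x y)))"

text \<open>Binary erasure channel: output alphabet bool option, None is the erasure symbol e.\<close>
definition BEC :: "real \<Rightarrow> bool \<Rightarrow> bool option \<Rightarrow> real" where
  "BEC \<epsilon> x y = (case y of None \<Rightarrow> \<epsilon> | Some b \<Rightarrow> (if b = x then 1 - \<epsilon> else 0))"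

definition degraded :: "('x \<Rightarrow> 'y::finite \<Rightarrow> real) \<Rightarrow> ('x \<Rightarrow> 'z::finite \<Rightarrow> real) \<Rightarrow> bool" where
  "degraded P Q \<longleftrightarrow> (\<exists>D :: 'y \<Rightarrow> 'z \<Rightarrow> real. is_channel D \<and>
      (\<forall>x z. Q x z = (\<Sum>y\<in>UNIV. P x y * D y z)))"

end

theory Submission
  imports Defs
begin

lemma sum_bool: "(\<Sum>b\<in>(UNIV::bool set). f b) = f True + f False"
  by (simp add: UNIV_bool add.commute)

lemma sum_opt: "(\<Sum>w\<in>(UNIV::bool option set). f w) = f None + f (Some True) + f (Some False)"
proof -
  have U: "(UNIV::bool option set) = {None, Some True, Some False}"
    using UNIV_option_conv UNIV_bool by auto
  show ?thesis unfolding U by (simp add: algebra_simps)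
qed

lemma dist_bool:
  assumes "is_dist (px::bool \<Rightarrow> real)" shows "px False = 1 - px True"
  using assms unfolding is_dist_def by (simp add: sum_bool)

lemma eta_bool:
  fixes P :: "bool \<Rightarrow> 'y::finite \<Rightarrow> real"
  shows "eta_TV P = TV (P True) (P False)"
proof -
  let ?t = "TV (P True) (P False)"
  have "{TV (out_dist P px) (out_dist P qx) / TV px qx | px qx.
                   is_dist px \<and> is_dist qx \<and> px \<noteq> qx} = {?t}"
  proof (rule set_eqI, rule iffI)
    fix r assume "r \<in> {TV (out_dist P px) (out_dist P qx) / TV px qx | px qx.
                   is_dist px \<and> is_dist qx \<and> px \<noteq> qx}"
    then obtain px qx where r: "r = TV (out_dist P px) (out_dist P qx) / TV px qx"
      and d: "is_dist px" "is_dist qx" "px \<noteq> qx" by blast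
    define a where "a = px True"
    define b where "b = qx True"
    have pf: "px False = 1 - a" "qx False = 1 - b" using dist_bool d a_def b_def by auto
    have "a \<noteq> b"
    proof
      assume "a = b"
      then have "px = qx" using pf a_def b_def
        by (metis (full_types) ext)
      with d show False by simp
    qed
    have tvx: "TV px qx = \<bar>a - b\<bar>" unfolding TV_def using pf a_def b_def
      by (simp add: sum_bool abs_minus_commute)
    have "\<And>y. out_dist P px y - out_dist P qx y = (a - b) * (P True y - P False y)"
      unfolding out_dist_def sum_bool pf a_def[symmetric] b_def[symmetric] by (simp add: algebra_simps)
    then have "TV (out_dist P px) (out_dist P qx) = \<bar>a - b\<bar> * ?t"
      unfolding TV_def by (simp add: abs_mult sum_distrib_left)
    then show "r \<in> {?t}" using r tvx \<open>a \<noteq> b\<close> by simp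
  next
    fix r assume "r \<in> {?t}"
    define px where "px = (\<lambda>b::bool. if b then 1::real else 0)"
    define qx where "qx = (\<lambda>b::bool. if b then 0::real else 1)"
    have d: "is_dist px" "is_dist qx" "px \<noteq> qx"
      unfolding is_dist_def px_def qx_def by (auto simp: sum_bool fun_eq_iff)
    have "TV px qx = 1" unfolding TV_def px_def qx_def by (simp add: sum_bool)
    moreover have "out_dist P px = P True" "out_dist P qx = P False"
      unfolding out_dist_def px_def qx_def by (auto simp: sum_bool)
    ultimately have "r = TV (out_dist P px) (out_dist P qx) / TV px qx" using \<open>r \<in> {?t}\<close> by simp
    then show "r \<in> {TV (out_dist P px) (out_dist P qx) / TV px qx | px qx.
                   is_dist px \<and> is_dist qx \<and> px \<noteq> qx}" using d by blast
  qed
  then show ?thesis unfolding eta_TV_def by simp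
qed

lemma min_range_bool: "Min (range (\<lambda>x::bool. f x)) = min (f True) (f False)"
proof -
  have "range f = {f True, f False}" using UNIV_bool by auto
  then show ?thesis by (simp add: min.commute)
qed

theorem mainTheorem8:
  fixes F :: "bool \<Rightarrow> 'y::finite \<Rightarrow> real"
  assumes "is_channel F"
  shows "doeblin F = 1 - eta_TV F \<and>
    (\<exists>D :: bool \<Rightarrow> bool \<Rightarrow> real. is_channel D \<and> eta_TV D = eta_TV F \<and>
       degraded (BEC (doeblin F)) F \<and> degraded F D)"
proof -
  define p where "p = F True"
  define q where "q = F False"
  define m where "m = (\<lambda>y. min (p y) (q y))"
  define \<alpha> where "\<alpha> = (\<Sum>y\<in>UNIV. m y)"
  have pd: "\<And>y. p y \<ge> 0" "sum p UNIV = 1" using assms unfolding p_def is_channel_def is_dist_def by auto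
  have qd: "\<And>y. q y \<ge> 0" "sum q UNIV = 1" using assms unfolding q_def is_channel_def is_dist_def by auto
  have doe: "doeblin F = \<alpha>" unfolding doeblin_def \<alpha>_def m_def p_def q_def
    by (simp add: min_range_bool)
  have eta: "eta_TV F = TV p q" using eta_bool p_def q_def by simp
  have "\<And>y. \<bar>p y - q y\<bar> = p y + q y - 2 * m y" unfolding m_def by (simp add: min_def abs_if)
  then have "TV p q = 1 - \<alpha>" unfolding TV_def \<alpha>_def
    by (simp add: sum_subtractf sum.distrib sum_distrib_left[symmetric] pd qd)
  then have part1: "doeblin F = 1 - eta_TV F" using doe eta by simp
  have mnn: "\<And>y. m y \<ge> 0" unfolding m_def using pd qd by simp
  have pm: "\<And>y. p y - m y \<ge> 0" "\<And>y. q y - m y \<ge> 0" unfolding m_def by auto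
  have spm: "sum (\<lambda>y. p y - m y) UNIV = 1 - \<alpha>" "sum (\<lambda>y. q y - m y) UNIV = 1 - \<alpha>"
    unfolding \<alpha>_def by (simp_all add: sum_subtractf pd qd)
  define G where "G = (\<lambda>w y. case w of None \<Rightarrow> (if \<alpha> = 0 then p y else m y / \<alpha>)
      | Some b \<Rightarrow> (if \<alpha> = 1 then p y else (F b y - m y) / (1 - \<alpha>)))"
  have a0: "\<alpha> = 0 \<Longrightarrow> m y = 0" for y
  proof -
    assume "\<alpha> = 0"
    then have "\<forall>y\<in>UNIV. m y = 0" using sum_nonneg_eq_0_iff[of UNIV m] mnn unfolding \<alpha>_def by auto
    then show ?thesis by simp
  qed
  have a1p: "\<alpha> = 1 \<Longrightarrow> p y - m y = 0" for y
    using sum_nonneg_eq_0_iff[of UNIV "\<lambda>y. p y - m y"] pm spm by auto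
  have a1q: "\<alpha> = 1 \<Longrightarrow> q y - m y = 0" for y
    using sum_nonneg_eq_0_iff[of UNIV "\<lambda>y. q y - m y"] pm spm by auto
  have a01a: "\<alpha> \<ge> 0" unfolding \<alpha>_def using mnn by (simp add: sum_nonneg)
  have "sum (\<lambda>y. p y - m y) UNIV \<ge> 0" using pm by (simp add: sum_nonneg)
  then have a01b: "\<alpha> \<le> 1" using spm(1) by simp
  note a01 = a01a a01b
  have Gch: "is_channel G"
    unfolding is_channel_def is_dist_def
  proof
    fix w
    show "(\<forall>a. 0 \<le> G w a) \<and> sum (G w) UNIV = 1"
    proof (cases w)
      case None
      have "sum (G w) UNIV = 1"
      proof (cases "\<alpha> = 0")
        case True then show ?thesis using None pd unfolding G_def by simp
      next
        case False
        then have "sum (G w) UNIV = (\<Sum>y\<in>UNIV. m y) / \<alpha>" using None unfolding G_def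
          by (simp add: sum_divide_distrib)
        then show ?thesis using False \<alpha>_def by simp
      qed
      moreover have "\<forall>a. 0 \<le> G w a" using None a01 pd mnn unfolding G_def by simp
      ultimately show ?thesis by simp
    next
      case (Some b)
      have "F b = p \<or> F b = q" unfolding p_def q_def by (cases b) auto
      have s1: "sum (\<lambda>y. F b y - m y) UNIV = 1 - \<alpha>" "\<forall>y. F b y - m y \<ge> 0"
        using \<open>F b = p \<or> F b = q\<close> spm pm by auto
      have "sum (G w) UNIV = 1"
      proof (cases "\<alpha> = 1")
        case True then show ?thesis using Some pd unfolding G_def by simp
      next
        case False
        then have "sum (G w) UNIV = (\<Sum>y\<in>UNIV. F b y - m y) / (1 - \<alpha>)" using Some unfolding G_def
          by (simp add: sum_divide_distrib)
        then show ?thesis using False s1 by simp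
      qed
      moreover have "\<forall>a. 0 \<le> G w a" using Some a01 pd s1 unfolding G_def by simp
      ultimately show ?thesis by simp
    qed
  qed
  have deg1: "degraded (BEC (doeblin F)) F"
    unfolding degraded_def doe
  proof (intro exI conjI allI)
    show "is_channel G" by (rule Gch)
    fix x z
    have fx: "F x = p \<or> F x = q" unfolding p_def q_def by (cases x) auto
    have e1: "\<alpha> * (if \<alpha> = 0 then p z else m z / \<alpha>) = m z" using a0 by auto
    have e2: "(1 - \<alpha>) * (if \<alpha> = 1 then p z else (F x z - m z) / (1 - \<alpha>)) = F x z - m z"
      using a1p a1q fx by auto
    show "F x z = (\<Sum>y\<in>UNIV. BEC \<alpha> x y * G y z)"
      unfolding sum_opt BEC_def G_def using e1 e2 by (cases x) auto
  qed
  define H where "H = (\<lambda>y (z::bool). if (p y \<ge> q y) = z then 1::real else 0)"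
  define D where "D = (\<lambda>x z. \<Sum>y\<in>UNIV. F x y * H y z)"
  have Hch: "is_channel H" unfolding is_channel_def is_dist_def H_def by (auto simp: sum_bool)
  have deg2: "degraded F D" unfolding degraded_def D_def using Hch by blast
  have Dch: "is_channel D" unfolding is_channel_def is_dist_def
  proof
    fix x
    have "\<forall>y. F x y \<ge> 0" "sum (F x) UNIV = 1" using assms unfolding is_channel_def is_dist_def by auto
    moreover have "sum (D x) UNIV = sum (F x) UNIV"
      unfolding D_def sum_bool sum.distrib[symmetric] by (rule sum.cong) (auto simp: H_def)
    moreover have "\<forall>a. 0 \<le> D x a" using \<open>\<forall>y. F x y \<ge> 0\<close> unfolding D_def H_def by (auto intro: sum_nonneg)
    ultimately show "(\<forall>a. 0 \<le> D x a) \<and> sum (D x) UNIV = 1" by simp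
  qed
  have etaD: "eta_TV D = TV (D True) (D False)" by (rule eta_bool)
  have "\<And>x. D x False = 1 - D x True" using Dch unfolding is_channel_def
    using dist_bool by blast
  then have "TV (D True) (D False) = \<bar>D True True - D False True\<bar>"
    unfolding TV_def by (simp add: sum_bool abs_minus_commute)
  also have "D True True - D False True = (\<Sum>y\<in>UNIV. (p y - q y) * H y True)"
    unfolding D_def p_def q_def by (simp add: sum_subtractf algebra_simps)
  also have "\<dots> = (\<Sum>y\<in>UNIV. max 0 (p y - q y))"
    unfolding H_def by (rule sum.cong) auto
  also have "\<bar>\<dots>\<bar> = (\<Sum>y\<in>UNIV. max 0 (p y - q y))" by (simp add: sum_nonneg)
  also have "\<dots> = (\<Sum>y\<in>UNIV. p y - m y)" unfolding m_def by (rule sum.cong) auto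
  also have "\<dots> = TV p q" using spm \<open>TV p q = 1 - \<alpha>\<close> by simp
  finally have "eta_TV D = eta_TV F" using etaD eta by simp
  then show ?thesis using part1 Dch deg1 deg2 by blast
qed

end
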